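(* Assume $p_1<1$, and assume either that $\mu\le1$, or that $\mu>1$ and $p_0+\cdots+p_r<1$. Then for this integer $r\ge0$, the equation $G_r(t)=t$ has a unique solution $t=q_{[0,r]}$ in $[0,1]$, and $$\mathbf{P}[M\le r]=q_{[0,r]}.$$
   Context: Let $p=(p_0,p_1,p_2,\dots)$ be a probability distribution on the nonnegative integers with mean $\mu=\sum_k kp_k\in(0,\infty)$, and let $\tau(p)$ be a Galton–Watson tree with offspring distribution $p$: it starts with a single root at generation $0$, and every vertex independently has $k$ children with probability $p_k$. The out-degree of a vertex is its number of children. $M_n$ denotes the maximal out-degree among the vertices of generation $n$ (with $M_n=0$ if generation $n$ is empty), and $M=\sup_{n\ge0}M_n$ is the global maximal out-degree (possibly infinite). For $x\in[0,1]$, $G_r(x)=\sum_{k=0}^r p_kx^k$ is the generating function of $p$ truncated at $r$. *)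

theory Defs
  imports "HOL-Probability.Probability"
begin

text \<open>Galton--Watson tree in Ulam--Harris encoding: vertices are finite lists of
natural numbers, the root is the empty list, and the children of a vertex u are
u @ [i] for i < xi u.\<close>

definition gw_vertices :: "(nat list \<Rightarrow> 'a \<Rightarrow> nat) \<Rightarrow> 'a \<Rightarrow> nat list set" where
  "gw_vertices xi w = {u. \<forall>j < length u. u ! j < xi (take j u) w}"

text \<open>Maximal out-degree in generation n (0 if the generation is empty).\<close>
definition gw_gen_max :: "(nat list \<Rightarrow> 'a \<Rightarrow> nat) \<Rightarrow> nat \<Rightarrow> 'a \<Rightarrow> enat" where
  "gw_gen_max xi n w = (SUP u \<in> {u \<in> gw_vertices xi w. length u = n}. enat (xi u w))"

definition gw_max :: "(nat list \<Rightarrow> 'a \<Rightarrow> nat) \<Rightarrow> 'a \<Rightarrow> enat" where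
  "gw_max xi w = (SUP n. gw_gen_max xi n w)"

definition trunc_gf :: "nat pmf \<Rightarrow> nat \<Rightarrow> real \<Rightarrow> real" where
  "trunc_gf p r x = (\<Sum>k\<le>r. pmf p k * x ^ k)"

definition offspring_mean :: "nat pmf \<Rightarrow> real" where
  "offspring_mean p = (\<Sum>k. real k * pmf p k)"

end

theory Submission
  imports Defs
begin


fun okr :: "nat \<Rightarrow> nat \<Rightarrow> (nat list \<Rightarrow> nat) \<Rightarrow> bool" where
  "okr r 0 g = True"
| "okr r (Suc n) g = (g [] \<le> r \<and> (\<forall>i. i < g [] \<longrightarrow> okr r n (\<lambda>u. g (i # u))))"



lemma pred_comp_count:
  assumes "f \<in> measurable N (count_space UNIV)"
  shows "Measurable.pred N (\<lambda>w. (P::nat\<Rightarrow>bool) (f w))"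
proof -
  have "{w \<in> space N. P (f w)} = f -` {k. P k} \<inter> space N" by auto
  also have "\<dots> \<in> sets N" using assms by (rule measurable_sets) simp
  finally show ?thesis unfolding pred_def .
qed

lemma pred_okr:
  assumes "\<And>u. X u \<in> measurable N (count_space UNIV)"
  shows "Measurable.pred N (\<lambda>w. okr r n (\<lambda>u. X u w))"
  using assms
proof (induction n arbitrary: X)
  case 0
  then show ?case by (simp add: pred_def)
next
  case (Suc n)
  have h: "Measurable.pred N (\<lambda>w. okr r n (\<lambda>u. X (i # u) w))" for i
    using Suc.IH[of "\<lambda>u. X (i # u)"] Suc.prems by blast
  have a: "Measurable.pred N (\<lambda>w. X [] w \<le> r)" by (rule pred_comp_count[OF Suc.prems])
  have b: "Measurable.pred N (\<lambda>w. i < X [] w)" for i by (rule pred_comp_count[OF Suc.prems])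
  show ?case
    by (simp only: okr.simps) (intro pred_intros_logic pred_intros_countable a b h)
qed

definition Vg :: "(nat list \<Rightarrow> nat) \<Rightarrow> nat list set" where
  "Vg g = {u. \<forall>j < length u. u ! j < g (take j u)}"

lemma Vg_Cons: "(i # v \<in> Vg g) \<longleftrightarrow> i < g [] \<and> v \<in> Vg (\<lambda>u. g (i # u))"
  unfolding Vg_def by (simp add: All_less_Suc2)

lemma okr_iff: "okr r n g \<longleftrightarrow> (\<forall>u \<in> Vg g. length u < n \<longrightarrow> g u \<le> r)"
proof (induction n arbitrary: g)
  case 0
  then show ?case by simp
next
  case (Suc n)
  show ?case
  proof
    assume H: "okr r (Suc n) g"
    show "\<forall>u \<in> Vg g. length u < Suc n \<longrightarrow> g u \<le> r"
    proof (intro ballI impI)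
      fix u assume u: "u \<in> Vg g" "length u < Suc n"
      show "g u \<le> r"
      proof (cases u)
        case Nil then show ?thesis using H by simp
      next
        case (Cons i v)
        then show ?thesis using H u Suc.IH[of "\<lambda>u. g (i # u)"] by (auto simp: Vg_Cons)
      qed
    qed
  next
    assume H: "\<forall>u \<in> Vg g. length u < Suc n \<longrightarrow> g u \<le> r"
    have "[] \<in> Vg g" by (simp add: Vg_def)
    then have "g [] \<le> r" using H by auto
    moreover have "okr r n (\<lambda>u. g (i # u))" if "i < g []" for i
      unfolding Suc.IH
    proof (intro ballI impI)
      fix v assume "v \<in> Vg (\<lambda>u. g (i # u))" "length v < n"
      then show "g (i # v) \<le> r" using H that by (auto simp: Vg_Cons)
    qed
    ultimately show "okr r (Suc n) g" by simp
  qed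
qed

lemma okr_mono: "okr r (Suc n) g \<Longrightarrow> okr r n g"
  by (simp add: okr_iff)

lemma okr_prob:
  assumes P: "prob_space M" and I: "prob_space.indep_vars M (\<lambda>_. count_space UNIV) xi UNIV"
    and D: "\<And>u. distr M (count_space UNIV) (xi u) = measure_pmf p"
  shows "inj \<phi> \<Longrightarrow> measure M {w\<in>space M. okr r n (\<lambda>u. xi (\<phi> u) w)} = (trunc_gf p r ^^ n) 1"
proof (induction n arbitrary: \<phi>)
  interpret prob_space M by (rule P)
  case 0
  then show ?case by (simp add: prob_space)
next
  interpret prob_space M by (rule P)
  case (Suc n)
  have xim: "xi u \<in> measurable M (count_space UNIV)" for u
    using I unfolding indep_vars_def by auto
  have pk: "measure M {w\<in>space M. xi u w = k} = pmf p k" for u k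
  proof -
    have "measure M {w\<in>space M. xi u w = k} = measure (distr M (count_space UNIV) (xi u)) {k}"
      by (subst measure_distr[OF xim]) (auto intro: arg_cong[where f="measure M"])
    also have "\<dots> = pmf p k" by (simp add: D measure_pmf_single)
    finally show ?thesis .
  qed
  define x where "x = (trunc_gf p r ^^ n) 1"
  define K where "K = (\<lambda>j. case j of None \<Rightarrow> {\<phi> []} | Some i \<Rightarrow> \<phi> ` range (Cons i))"
  have disj: "disjoint_family_on K UNIV"
    unfolding disjoint_family_on_def K_def using Suc.prems
    by (auto split: option.splits simp: inj_eq)
  have ind2: "indep_vars (\<lambda>j. PiM (K j) (\<lambda>_. count_space UNIV)) (\<lambda>j w. restrict (\<lambda>u. xi u w) (K j)) UNIV"
    by (rule indep_vars_restrict[OF I _ disj]) auto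
  define F where "F k = {w\<in>space M. xi (\<phi> []) w = k \<and> (\<forall>i. i<k \<longrightarrow> okr r n (\<lambda>u. xi (\<phi> (i#u)) w))}" for k
  have E: "{w\<in>space M. okr r (Suc n) (\<lambda>u. xi (\<phi> u) w)} = (\<Union>k\<in>{..r}. F k)"
    unfolding F_def by auto
  have Fsets: "F k \<in> sets M" for k
  proof -
    have "Measurable.pred M (\<lambda>w. xi (\<phi> []) w = k \<and> (\<forall>i. i<k \<longrightarrow> okr r n (\<lambda>u. xi (\<phi> (i#u)) w)))"
      by (intro pred_intros_logic pred_intros_countable pred_comp_count[OF xim] pred_okr xim)
    then show ?thesis unfolding F_def pred_def .
  qed
  have Fk: "measure M (F k) = pmf p k * x ^ k" for k
  proof -
    define A where "A j = (case j of None \<Rightarrow> {f \<in> space (PiM (K None) (\<lambda>_. count_space UNIV)). f (\<phi> []) = k}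
        | Some i \<Rightarrow> {f \<in> space (PiM (K (Some i)) (\<lambda>_. count_space UNIV)). okr r n (\<lambda>u. f (\<phi> (i#u)))})" for j
    define J where "J = insert None (Some ` {..<k})"
    have Asets: "A j \<in> sets (PiM (K j) (\<lambda>_. count_space UNIV))" for j
    proof (cases j)
      case None
      have "Measurable.pred (PiM (K None) (\<lambda>_. count_space UNIV)) (\<lambda>f. f (\<phi> []) = k)"
        by (rule pred_comp_count, rule measurable_component_singleton) (simp add: K_def)
      then show ?thesis using None unfolding A_def pred_def by simp
    next
      case (Some i)
      have "Measurable.pred (PiM (K (Some i)) (\<lambda>_. count_space UNIV)) (\<lambda>f. okr r n (\<lambda>u. f (\<phi> (i#u))))"
        by (rule pred_okr, rule measurable_component_singleton) (simp add: K_def)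
      then show ?thesis using Some unfolding A_def pred_def by simp
    qed
    have FJ: "F k = (\<Inter>j\<in>J. (\<lambda>w. restrict (\<lambda>u. xi u w) (K j)) -` A j \<inter> space M)"
      unfolding F_def J_def A_def by (auto simp: K_def space_PiM)
    have "measure M (F k) = (\<Prod>j\<in>J. prob ((\<lambda>w. restrict (\<lambda>u. xi u w) (K j)) -` A j \<inter> space M))"
      unfolding FJ by (rule indep_varsD[OF ind2]) (auto simp: J_def Asets)
    also have "\<dots> = pmf p k * x ^ k"
    proof -
      have "prob ((\<lambda>w. restrict (\<lambda>u. xi u w) (K None)) -` A None \<inter> space M) = pmf p k"
      proof -
        have "(\<lambda>w. restrict (\<lambda>u. xi u w) (K None)) -` A None \<inter> space M = {w\<in>space M. xi (\<phi> []) w = k}"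
          by (auto simp: A_def K_def space_PiM)
        then show ?thesis using pk[of "\<phi> []" k] by simp
      qed
      moreover have "prob ((\<lambda>w. restrict (\<lambda>u. xi u w) (K (Some i))) -` A (Some i) \<inter> space M) = x" for i
      proof -
        have "inj (\<lambda>u. \<phi> (i # u))" using Suc.prems by (auto simp: inj_def)
        from Suc.IH[OF this] have "prob {w\<in>space M. okr r n (\<lambda>u. xi (\<phi> (i # u)) w)} = x"
          by (simp add: x_def)
        moreover have "(\<lambda>w. restrict (\<lambda>u. xi u w) (K (Some i))) -` A (Some i) \<inter> space M = {w\<in>space M. okr r n (\<lambda>u. xi (\<phi> (i # u)) w)}"
          by (auto simp: A_def K_def space_PiM)
        ultimately show ?thesis by simp
      qed
      ultimately show ?thesis unfolding J_def
        by (subst prod.insert) (auto simp: prod.reindex)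
    qed
    finally show ?thesis .
  qed
  have "measure M {w\<in>space M. okr r (Suc n) (\<lambda>u. xi (\<phi> u) w)} = (\<Sum>k\<le>r. measure M (F k))"
    unfolding E
    using Fsets by (intro finite_measure_finite_Union) (auto simp: disjoint_family_on_def F_def)
  also have "\<dots> = trunc_gf p r x" unfolding Fk trunc_gf_def by simp
  finally show ?case by (simp add: x_def)
qed



lemma tg_nonneg: "0 \<le> x \<Longrightarrow> 0 \<le> trunc_gf p r x"
  unfolding trunc_gf_def by (intro sum_nonneg mult_nonneg_nonneg) auto

lemma tg_mono: "0 \<le> x \<Longrightarrow> x \<le> y \<Longrightarrow> trunc_gf p r x \<le> trunc_gf p r y"
  unfolding trunc_gf_def by (intro sum_mono mult_left_mono power_mono) auto

lemma tg_one: "trunc_gf p r 1 = (\<Sum>k\<le>r. pmf p k)"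
  unfolding trunc_gf_def by simp

lemma S_le1: "(\<Sum>k\<le>(r::nat). pmf p k) \<le> 1"
proof -
  have "(\<Sum>k\<le>r. pmf p k) = measure (measure_pmf p) {..r}"
    by (subst measure_measure_pmf_finite) auto
  also have "\<dots> \<le> 1" by simp
  finally show ?thesis .
qed

lemma tg_cont: "continuous_on A (trunc_gf p r)"
  unfolding trunc_gf_def by (intro continuous_intros)

lemma tg_isCont: "isCont (trunc_gf p r) x"
  unfolding trunc_gf_def by (intro continuous_intros)

lemma tg_diff: "trunc_gf p r b - trunc_gf p r a
   = (b - a) * (\<Sum>k\<le>r. pmf p k * (\<Sum>i<k. a ^ (k - Suc i) * b ^ i))"
proof -
  have "trunc_gf p r b - trunc_gf p r a = (\<Sum>k\<le>r. pmf p k * (b^k - a^k))"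
    by (simp add: trunc_gf_def sum_subtractf[symmetric] right_diff_distrib)
  also have "\<dots> = (\<Sum>k\<le>r. (b - a) * (pmf p k * (\<Sum>i<k. a ^ (k - Suc i) * b ^ i)))"
    by (intro sum.cong refl) (simp add: power_diff_sumr2 mult.left_commute)
  also have "\<dots> = (b - a) * (\<Sum>k\<le>r. pmf p k * (\<Sum>i<k. a ^ (k - Suc i) * b ^ i))"
    by (simp add: sum_distrib_left)
  finally show ?thesis .
qed

lemma fix_unique_lt1:
  assumes S: "(\<Sum>k\<le>r. pmf p k) < 1"
    and a: "0 \<le> a" "a < b" "b \<le> 1" and fa: "trunc_gf p r a = a" and fb: "trunc_gf p r b = b"
  shows False
proof -
  let ?Q = "\<lambda>a b. (\<Sum>k\<le>r. pmf p k * (\<Sum>i<k. a ^ (k - Suc i) * b ^ i))"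
  have "b - a = (b - a) * ?Q a b" using tg_diff[of p r b a] fa fb by simp
  then have Q1: "?Q a b = 1" using a by simp
  have "?Q a b \<le> ?Q b 1"
    using a by (intro sum_mono mult_left_mono mult_mono power_mono) (auto simp: power_le_one)
  then have "1 - b \<le> (1 - b) * ?Q b 1" using Q1 a by (simp add: mult_left_mono[of 1 "?Q b 1" "1-b", simplified])
  also have "\<dots> = trunc_gf p r 1 - b" using tg_diff[of p r 1 b] fb by simp
  finally have "1 \<le> trunc_gf p r 1" by simp
  with S show False by (simp add: tg_one)
qed

lemma d_pos:
  fixes a :: real assumes a: "0 \<le> a" "a < 1"
  shows "0 \<le> a^k - a + (real k - 1)*(1-a)" and "2 \<le> k \<Longrightarrow> 0 < a^k - a + (real k - 1)*(1-a)"
proof -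
  have main: "real m * (1-a) * (1-a) \<le> a^(Suc m) - a + (real (Suc m) - 1)*(1-a)" for m
  proof -
    have "1 + real m * (a - 1) \<le> a ^ m" using Bernoulli_inequality[of "a - 1" m] a by simp
    then have "a * (1 + real m * (a - 1)) \<le> a * a ^ m" using a by (intro mult_left_mono) auto
    then show ?thesis by (simp add: algebra_simps)
  qed
  show "0 \<le> a^k - a + (real k - 1)*(1-a)"
  proof (cases k)
    case 0 then show ?thesis by simp
  next
    case (Suc m)
    have "0 \<le> real m * (1-a) * (1-a)" using a by simp
    then show ?thesis using main[of m] unfolding Suc by linarith
  qed
  assume "2 \<le> k"
  then obtain m where m: "k = Suc m" "1 \<le> m" by (cases k) auto
  have "0 < real m * (1-a) * (1-a)" using a m by simp
  then show "0 < a^k - a + (real k - 1)*(1-a)" using main[of m] unfolding m(1) by linarith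
qed

lemma fix_S1:
  fixes p :: "nat pmf"
  assumes S: "(\<Sum>k\<le>r. pmf p k) = 1" and T: "(\<Sum>k\<le>r. real k * pmf p k) \<le> 1"
    and p1: "pmf p 1 < 1" and a: "0 \<le> a" "a < 1" and fa: "trunc_gf p r a = a"
  shows False
proof -
  define d where "d k = a^k - a + (real k - 1)*(1-a)" for k
  define T' where "T' = (\<Sum>k\<le>r. real k * pmf p k)"
  have "(\<Sum>k\<le>r. pmf p k * d k) = (\<Sum>k\<le>r. pmf p k * a^k - a * pmf p k + (1-a) * (real k * pmf p k) - (1-a) * pmf p k)"
    unfolding d_def by (intro sum.cong refl) (simp add: algebra_simps)
  also have "\<dots> = trunc_gf p r a - a * (\<Sum>k\<le>r. pmf p k) + (1-a) * T' - (1-a) * (\<Sum>k\<le>r. pmf p k)"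
    by (simp add: sum.distrib sum_subtractf sum_distrib_left trunc_gf_def T'_def)
  finally have id: "(\<Sum>k\<le>r. pmf p k * d k) + (1-a)*(1 - T') = 0"
    using S fa by (simp add: algebra_simps)
  have dn: "0 \<le> pmf p k * d k" for k using d_pos(1)[OF a, of k] by (simp add: d_def)
  have t1: "0 \<le> (1-a)*(1 - T')" using a T by (simp add: T'_def)
  have s0: "(\<Sum>k\<le>r. pmf p k * d k) = 0" using id t1 sum_nonneg[of "{..r}" "\<lambda>k. pmf p k * d k", OF dn] by linarith
  then have "\<forall>k\<in>{..r}. pmf p k * d k = 0" using dn by (subst sum_nonneg_eq_0_iff[symmetric]) auto
  then have pz: "pmf p k = 0" if "2 \<le> k" "k \<le> r" for k
    using that d_pos(2)[OF a that(1)] by (auto simp: d_def)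
  have "T' = 1" using id s0 a by simp
  moreover have "T' = (\<Sum>k\<le>r. if k = 1 then pmf p 1 else 0)"
    unfolding T'_def
  proof (intro sum.cong refl)
    fix k assume "k \<in> {..r}"
    then show "real k * pmf p k = (if k = 1 then pmf p 1 else 0)"
      using pz[of k] by (cases "k = 0 \<or> k = 1") auto
  qed
  ultimately have "(\<Sum>k\<le>r. if k = 1 then pmf p 1 else 0) = 1" by simp
  then show False using p1 by (simp add: sum.delta split: if_splits)
qed



lemma gw_max_iff: "gw_max xi w \<le> enat r \<longleftrightarrow> (\<forall>n. okr r n (\<lambda>u. xi u w))"
proof -
  have V: "gw_vertices xi w = Vg (\<lambda>u. xi u w)" by (simp add: gw_vertices_def Vg_def)
  have "gw_max xi w \<le> enat r \<longleftrightarrow> (\<forall>u\<in>Vg (\<lambda>u. xi u w). xi u w \<le> r)"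
    by (auto simp: gw_max_def gw_gen_max_def SUP_le_iff V)
  also have "\<dots> \<longleftrightarrow> (\<forall>n. okr r n (\<lambda>u. xi u w))"
    unfolding okr_iff by (metis lessI)
  finally show ?thesis .
qed

theorem lemma2p5:
  fixes M :: "'a measure" and xi :: "nat list \<Rightarrow> 'a \<Rightarrow> nat" and p :: "nat pmf" and r :: nat
  assumes "prob_space M"
    and "prob_space.indep_vars M (\<lambda>_. count_space UNIV) xi UNIV"
    and "\<And>u. distr M (count_space UNIV) (xi u) = measure_pmf p"
    and "summable (\<lambda>k. real k * pmf p k)"
    and "offspring_mean p > 0"
    and "pmf p 1 < 1"
    and "offspring_mean p \<le> 1 \<or> (offspring_mean p > 1 \<and> (\<Sum>k\<le>r. pmf p k) < 1)"
  shows "(\<exists>!t. t \<in> {0..1} \<and> trunc_gf p r t = t) \<and>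
         measure M {w \<in> space M. gw_max xi w \<le> enat r}
           = (THE t. t \<in> {0..1} \<and> trunc_gf p r t = t)"
proof -
  interpret prob_space M by (rule assms(1))
  let ?G = "trunc_gf p r"
  have Tb: "(\<Sum>k\<le>r. real k * pmf p k) \<le> offspring_mean p"
    unfolding offspring_mean_def by (rule sum_le_suminf[OF assms(4)]) auto
  have uniq: "a = b" if a: "a \<in> {0..1}" "?G a = a" and b: "b \<in> {0..1}" "?G b = b" for a b
  proof (cases "(\<Sum>k\<le>r. pmf p k) < 1")
    case True
    show ?thesis
    proof (rule ccontr)
      assume "a \<noteq> b"
      then have "a < b \<or> b < a" by auto
      then show False
        using fix_unique_lt1[OF True, of a b] fix_unique_lt1[OF True, of b a] a b by auto
    qed
  next
    case False
    then have S: "(\<Sum>k\<le>r. pmf p k) = 1" using S_le1[of p r] by linarith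
    have T: "(\<Sum>k\<le>r. real k * pmf p k) \<le> 1" using False assms(7) Tb by linarith
    have "a = 1" using fix_S1[OF S T assms(6), of a] a by force
    moreover have "b = 1" using fix_S1[OF S T assms(6), of b] b by force
    ultimately show ?thesis by simp
  qed
  have ex: "\<exists>t. t \<in> {0..1} \<and> ?G t = t"
  proof -
    have "\<exists>x\<ge>0. x \<le> 1 \<and> (\<lambda>t. ?G t - t) x = 0"
    proof (rule IVT2)
      show "?G 1 - 1 \<le> 0" using S_le1[of p r] by (simp add: tg_one)
      show "0 \<le> ?G 0 - 0" using tg_nonneg[of 0 p r] by simp
    qed (auto intro!: continuous_intros tg_isCont)
    then show ?thesis by auto
  qed
  have eu: "\<exists>!t. t \<in> {0..1} \<and> ?G t = t" using ex uniq by blast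
  define q where "q = (THE t. t \<in> {0..1} \<and> ?G t = t)"
  have q: "q \<in> {0..1}" "?G q = q" using theI'[OF eu] unfolding q_def by auto
  define x where "x n = (?G ^^ n) 1" for n
  have xb: "0 \<le> x n \<and> x n \<le> 1" for n
  proof (induction n)
    case 0 then show ?case by (simp add: x_def)
  next
    case (Suc n)
    have "?G (x n) \<le> ?G 1" using Suc tg_mono[of "x n" 1 p r] by simp
    then have "?G (x n) \<le> 1" using S_le1[of p r] by (simp add: tg_one)
    then show ?case using tg_nonneg[of "x n" p r] Suc by (simp add: x_def)
  qed
  have xdec: "x (Suc n) \<le> x n" for n
  proof (induction n)
    case 0 then show ?case using xb[of 1] by (simp add: x_def)
  next
    case (Suc n)
    have "?G (x (Suc n)) \<le> ?G (x n)" using Suc xb tg_mono by blast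
    then show ?case by (simp add: x_def)
  qed
  obtain L where L: "x \<longlonglongrightarrow> L" "\<forall>i. L \<le> x i"
    using decseq_convergent[of x 0] xdec xb by (auto simp: decseq_Suc_iff)
  have "0 \<le> L" using LIMSEQ_le_const[OF L(1), of 0] xb by auto
  moreover have "L \<le> 1" using L(2) xb[of 0] by (metis order_trans)
  ultimately have L01: "L \<in> {0..1}" by simp
  have "(\<lambda>n. ?G (x n)) \<longlonglongrightarrow> ?G L" by (rule isCont_tendsto_compose[OF tg_isCont L(1)])
  moreover have "(\<lambda>n. ?G (x n)) = (\<lambda>n. x (Suc n))" by (simp add: x_def)
  ultimately have "(\<lambda>n. x (Suc n)) \<longlonglongrightarrow> ?G L" by simp
  then have "?G L = L" using L(1) LIMSEQ_Suc LIMSEQ_unique by blast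
  then have Lq: "L = q" using uniq[OF L01 _ q] by simp
  define A where "A n = {w\<in>space M. okr r n (\<lambda>u. xi u w)}" for n
  have xim: "xi u \<in> measurable M (count_space UNIV)" for u
    using assms(2) unfolding indep_vars_def by auto
  have mA: "measure M (A n) = x n" for n
    using okr_prob[OF assms(1-3), of "\<lambda>u. u" r n] by (simp add: A_def x_def inj_def)
  have Asets: "range A \<subseteq> sets M"
    using pred_okr[of xi M, OF xim] unfolding A_def pred_def by blast
  have Adec: "decseq A" unfolding decseq_Suc_iff A_def using okr_mono by blast
  have "(\<lambda>n. measure M (A n)) \<longlonglongrightarrow> measure M (\<Inter> (range A))"
    by (rule finite_Lim_measure_decseq[OF Asets Adec])
  then have "measure M (\<Inter> (range A)) = L" using L(1) mA LIMSEQ_unique by auto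
  moreover have "{w \<in> space M. gw_max xi w \<le> enat r} = \<Inter> (range A)"
    unfolding gw_max_iff A_def by auto
  ultimately show ?thesis using eu Lq q_def by simp
qed

end
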